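(* Assume the setting below with $k\ge2$, and suppose $\mathcal{S}$ is pseudo-symmetric. Let $(x_1,y_1)\in L$ be the point with $\varphi(x_1,y_1)=g(\mathcal{S})/2+a$. Then (a) either $y_1=0$ or $(x_1,y_1+1)\notin L$; (b) either $x_1<k$ or $(x_1+k,y_1)\notin L$; (c) either $x_1=0$, or $(x_1+1,y_1)\notin L$, or $x_1\equiv1\pmod k$.
   Context: Setting (AA-semigroups). Let $a,d,k,c$ be positive integers with $\gcd(a,a+d,\ldots,a+kd,c)=1$ and $\gcd(a,d)=1$, and let $\mathcal{S}=\langle a,a+d,\ldots,a+kd,c\rangle$ be the numerical semigroup of non-negative integer combinations of these generators; $g(\mathcal{S})$ is its Frobenius number (largest integer not in $\mathcal{S}$). $\mathcal{S}$ is pseudo-symmetric if $g(\mathcal{S})$ is even and $\mathcal{S}\cup(g(\mathcal{S})-\mathcal{S})=\mathbb{Z}\setminus\{g(\mathcal{S})/2\}$. Put $s_{-1}=a$ and let $s_0$ be the unique integer with $ds_0\equiv c\pmod a$, $0\le s_0<a$. If $s_0=0$ set $m=-1$. Otherwise define $q_{i+1},s_{i+1}$ for $i=0,1,2,\ldots$ by $s_{i-1}=q_{i+1}s_i-s_{i+1}$ with $0\le s_{i+1}<s_i$, and let $m$ be the index with $s_m>0=s_{m+1}$ (so $s_m=\gcd(a,c)$). Define $P_{-1}=0$, $P_0=1$, $P_{i+1}=q_{i+1}P_i-P_{i-1}$ for $i=0,\ldots,m$, and $R_i=\frac1a\big((a+kd)s_i-kcP_i\big)$ for $-1\le i\le m+1$;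 these are integers with $-c/s_m=R_{m+1}<R_m<\cdots<R_0<R_{-1}=a+kd$. Let $v$ be the unique integer with $R_{v+1}\le0<R_v$. Let $L=A\cup B$, where $A=\{(x,y)\in\mathbb{Z}^2:0\le x\le s_v-1,\ 0\le y\le P_{v+1}-P_v-1\}$ and $B=\{(x,y)\in\mathbb{Z}^2:0\le x\le s_v-s_{v+1}-1,\ P_{v+1}-P_v\le y\le P_{v+1}-1\}$. Define $\varphi:\mathbb{Z}^2\to\mathbb{Z}$, $\varphi(x,y)=\lceil x/k\rceil a+xd+yc$. It is known (Rødseth) that $|L|=a$ and $\varphi$ maps $L$ bijectively onto $\mathrm{Ap}(\mathcal{S};a)=\{s\in\mathcal{S}:s-a\notin\mathcal{S}\}$; consequently $g(\mathcal{S})+a=\max\varphi(L)$ is attained at $(s_v-s_{v+1}-1,P_{v+1}-1)$ or at $(s_v-1,P_{v+1}-P_v-1)$. *)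

theory Defs
  imports Complex_Main "HOL-Number_Theory.Cong"
begin

definition gen_sg :: "int set \<Rightarrow> int set" where
  "gen_sg G = {n. \<exists>f::int \<Rightarrow> int. (\<forall>g. f g \<ge> 0) \<and> n = (\<Sum>g\<in>G. f g * g)}"

definition AA_gens :: "int \<Rightarrow> int \<Rightarrow> int \<Rightarrow> int \<Rightarrow> int set" where
  "AA_gens a d k c = {a + i * d | i. 0 \<le> i \<and> i \<le> k} \<union> {c}"

definition frob :: "int set \<Rightarrow> int" where
  "frob S = (GREATEST n. n \<notin> S)"

definition pseudo_symmetric :: "int set \<Rightarrow> bool" where
  "pseudo_symmetric S \<longleftrightarrow> even (frob S) \<and>
     S \<union> {frob S - s | s. s \<in> S} = UNIV - {frob S div 2}"

text \<open>State after n steps: (s_{n-1}, s_n, P_{n-1}, P_n), starting from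
  (s_{-1}, s_0, P_{-1}, P_0) = (a, s0, 0, 1).  Step: q = ceiling(s_{i-1}/s_i),
  s_{i+1} = q s_i - s_{i-1}, P_{i+1} = q P_i - P_{i-1} (only meaningful while s_i > 0).\<close>
fun cf_state :: "int \<Rightarrow> int \<Rightarrow> nat \<Rightarrow> int \<times> int \<times> int \<times> int" where
  "cf_state a s0 0 = (a, s0, 0, 1)"
| "cf_state a s0 (Suc n) = (case cf_state a s0 n of (u, v, p, r) \<Rightarrow>
     (let q = (if v = 0 then 0 else \<lceil>of_int u / of_int v :: real\<rceil>)
      in (v, q * v - u, r, q * r - p)))"

definition sseq :: "int \<Rightarrow> int \<Rightarrow> int \<Rightarrow> int" where
  "sseq a s0 i = fst (cf_state a s0 (nat (i + 1)))"

definition Pseq :: "int \<Rightarrow> int \<Rightarrow> int \<Rightarrow> int" where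
  "Pseq a s0 i = fst (snd (snd (cf_state a s0 (nat (i + 1)))))"

definition Rseq :: "int \<Rightarrow> int \<Rightarrow> int \<Rightarrow> int \<Rightarrow> int \<Rightarrow> int \<Rightarrow> real" where
  "Rseq a d k c s0 i = real_of_int ((a + k * d) * sseq a s0 i - k * c * Pseq a s0 i) / real_of_int a"

definition Lset :: "int \<Rightarrow> int \<Rightarrow> int \<Rightarrow> (int \<times> int) set" where
  "Lset a s0 v =
     {(x, y). 0 \<le> x \<and> x \<le> sseq a s0 v - 1 \<and> 0 \<le> y \<and> y \<le> Pseq a s0 (v+1) - Pseq a s0 v - 1}
   \<union> {(x, y). 0 \<le> x \<and> x \<le> sseq a s0 v - sseq a s0 (v+1) - 1 \<and>
        Pseq a s0 (v+1) - Pseq a s0 v \<le> y \<and> y \<le> Pseq a s0 (v+1) - 1}"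

definition phi :: "int \<Rightarrow> int \<Rightarrow> int \<Rightarrow> int \<Rightarrow> int \<times> int \<Rightarrow> int" where
  "phi a d k c p = (case p of (x, y) \<Rightarrow>
      \<lceil>of_int x / of_int k :: real\<rceil> * a + x * d + y * c)"

end

theory Submission
  imports Defs
begin


definition CC :: "int \<Rightarrow> int \<Rightarrow> int" where
  "CC k x = \<lceil>real_of_int x / real_of_int k\<rceil>"

lemma CC_le: "k > 0 \<Longrightarrow> x \<le> k*t \<Longrightarrow> CC k x \<le> t"
  unfolding CC_def ceiling_le_iff
  by (simp add: pos_divide_le_eq mult.commute of_int_mult[symmetric] del: of_int_mult)

lemma CC_ge: "k > 0 \<Longrightarrow> k*t - k < x \<Longrightarrow> t \<le> CC k x"
  unfolding CC_def le_ceiling_iff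
proof -
  assume k: "k > 0" and h: "k*t - k < x"
  have "k*(t-1) < x" using h by (simp add: algebra_simps)
  hence "real_of_int (k*(t-1)) < real_of_int x" by (simp only: of_int_less_iff)
  hence "real_of_int k * (real_of_int t - 1) < real_of_int x" by simp
  thus "real_of_int t - 1 < real_of_int x / real_of_int k" using k
    by (simp add: pos_less_divide_eq mult.commute)
qed

lemma CC_ub: "k > 0 \<Longrightarrow> x \<le> k * CC k x"
proof -
  assume k: "k > 0"
  have "real_of_int x / real_of_int k \<le> real_of_int (CC k x)" unfolding CC_def by (rule le_of_int_ceiling)
  hence "real_of_int x \<le> real_of_int k * real_of_int (CC k x)" using k by (simp add: pos_divide_le_eq mult.commute)
  thus ?thesis by (metis of_int_le_iff of_int_mult)
qed

lemma CC_lb: "k > 0 \<Longrightarrow> k * CC k x - k < x"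
proof -
  assume k: "k > 0"
  have "real_of_int (CC k x) - 1 < real_of_int x / real_of_int k" unfolding CC_def by (simp add: ceiling_correct)
  hence "(real_of_int (CC k x) - 1) * real_of_int k < real_of_int x" using k by (simp add: pos_less_divide_eq)
  hence "real_of_int ((CC k x - 1) * k) < real_of_int x" by simp
  hence "(CC k x - 1) * k < x" by (simp only: of_int_less_iff)
  thus ?thesis by (simp add: algebra_simps)
qed

lemma phi_eq: "phi a d k c (x, y) = CC k x * a + x*d + y*c"
  by (simp add: phi_def CC_def)

definition cinv :: "int \<Rightarrow> int \<Rightarrow> int \<times> int \<times> int \<times> int \<Rightarrow> bool" where
  "cinv a s0 st = (case st of (u, w, p, r) \<Rightarrow>
     u*r - w*p = a \<and> a dvd (u - p*s0) \<and> a dvd (w - r*s0) \<and>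
     ((0 \<le> w \<and> w < u \<and> 0 \<le> p \<and> p < r) \<or>
      (u = 0 \<and> w < 0 \<and> r \<le> 0 \<and> 0 < p \<and> -r < p) \<or>
      (u < 0 \<and> w = 0 \<and> p \<le> 0 \<and> r < p) \<or>
      (u = 0 \<and> 0 < w \<and> p < 0 \<and> 0 \<le> r \<and> r < -p)))"

lemma dvd_step: "(a::int) dvd (w - r*s0) \<Longrightarrow> a dvd (u - p*s0) \<Longrightarrow> a dvd ((q*w - u) - (q*r - p)*s0)"
proof -
  assume "a dvd (w - r*s0)" "a dvd (u - p*s0)"
  hence "a dvd (q*(w - r*s0) - (u - p*s0))" by simp
  thus ?thesis by (simp add: algebra_simps)
qed

lemma cf_inv: assumes "0 \<le> s0" "s0 < a" shows "cinv a s0 (cf_state a s0 n)"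
proof (induction n)
  case 0 then show ?case using assms by (simp add: cinv_def)
next
  case (Suc n)
  obtain u w p r where st: "cf_state a s0 n = (u, w, p, r)" by (metis prod.exhaust)
  define q where "q = (if w = 0 then 0 else \<lceil>of_int u / of_int w :: real\<rceil>)"
  have new: "cf_state a s0 (Suc n) = (w, q*w - u, r, q*r - p)" by (simp add: st q_def Let_def)
  have I: "u*r - w*p = a" "a dvd (u - p*s0)" "a dvd (w - r*s0)"
    and D: "(0 \<le> w \<and> w < u \<and> 0 \<le> p \<and> p < r) \<or>
      (u = 0 \<and> w < 0 \<and> r \<le> 0 \<and> 0 < p \<and> -r < p) \<or>
      (u < 0 \<and> w = 0 \<and> p \<le> 0 \<and> r < p) \<or>
      (u = 0 \<and> 0 < w \<and> p < 0 \<and> 0 \<le> r \<and> r < -p)" using Suc st by (auto simp: cinv_def)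
  have det: "w*(q*r - p) - (q*w - u)*r = a" using I(1) by (simp add: algebra_simps)
  have dv: "a dvd ((q*w - u) - (q*r - p)*s0)" by (rule dvd_step[OF I(3) I(2)])
  have shape: "(0 \<le> q*w - u \<and> q*w - u < w \<and> 0 \<le> r \<and> r < q*r - p) \<or>
      (w = 0 \<and> q*w - u < 0 \<and> q*r - p \<le> 0 \<and> 0 < r \<and> -(q*r - p) < r) \<or>
      (w < 0 \<and> q*w - u = 0 \<and> r \<le> 0 \<and> q*r - p < r) \<or>
      (w = 0 \<and> 0 < q*w - u \<and> r < 0 \<and> 0 \<le> q*r - p \<and> q*r - p < -r)"
  proof -
    consider (T1p) "0 < w" "w < u" "0 \<le> p" "p < r" | (T10) "w = 0" "0 < u" "0 \<le> p" "p < r"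
      | (T2) "u = 0" "w < 0" "r \<le> 0" "0 < p" "-r < p"
      | (T3) "u < 0" "w = 0" "p \<le> 0" "r < p"
      | (T4) "u = 0" "0 < w" "p < 0" "0 \<le> r" "r < -p" using D by force
    then show ?thesis
    proof cases
      case T1p
      have qd: "q = \<lceil>of_int u / of_int w :: real\<rceil>" using T1p by (simp add: q_def)
      have "q*w - u \<ge> 0" using CC_ub[of w u] T1p by (simp add: qd CC_def mult.commute)
      moreover have "q*w - u < w" using CC_lb[of w u] T1p by (simp add: qd CC_def mult.commute)
      moreover have q2: "q \<ge> 2"
      proof -
        have "w*2 - w < u" using T1p by simp
        thus ?thesis using CC_ge[of w 2 u] T1p by (simp add: qd CC_def)
      qed
      moreover have "r < q*r - p"
      proof -
        have "q*r \<ge> 2*r" using q2 T1p by (intro mult_right_mono) auto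
        thus ?thesis using T1p by linarith
      qed
      ultimately show ?thesis using T1p by auto
    next
      case T10 then show ?thesis by (simp add: q_def)
    next
      case T2 then show ?thesis by (simp add: q_def)
    next
      case T3 then show ?thesis by (simp add: q_def)
    next
      case T4 then show ?thesis by (simp add: q_def)
    qed
  qed
  show ?case unfolding new cinv_def using det dv I(3) shape by auto
qed



definition LL :: "int \<Rightarrow> int \<Rightarrow> int \<Rightarrow> int \<Rightarrow> (int \<times> int) set" where
  "LL U W Pp Pr = {(x,y). 0 \<le> x \<and> x < U \<and> 0 \<le> y \<and> y < Pr - Pp} \<union>
                   {(x,y). 0 \<le> x \<and> x < U - W \<and> Pr - Pp \<le> y \<and> y < Pr}"

definition ph :: "int \<Rightarrow> int \<Rightarrow> int \<Rightarrow> int \<Rightarrow> int \<times> int \<Rightarrow> int" where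
  "ph a d k c p = CC k (fst p) * a + fst p * d + snd p * c"

lemma CC_nonneg: "k > 0 \<Longrightarrow> 0 \<le> x \<Longrightarrow> 0 \<le> CC k x"
  using CC_ge[of k 0 x] by simp

lemma CC_mono: "k > 0 \<Longrightarrow> x \<le> x' \<Longrightarrow> CC k x \<le> CC k x'"
  using CC_le[of k x "CC k x'"] CC_ub[of k x'] by simp

lemma CC_add: "k > 0 \<Longrightarrow> CC k (x + w) \<le> CC k x + CC k w"
  using CC_le[of k "x+w" "CC k x + CC k w"] CC_ub[of k x] CC_ub[of k w] by (simp add: algebra_simps)

lemma CC_sub: "k > 0 \<Longrightarrow> CC k (x - U) \<le> CC k x - U div k"
proof -
  assume k: "k > 0"
  have "k * (U div k) \<le> U" using k mult_div_mod_eq[of k U] pos_mod_sign[of k U] by linarith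
  hence "x - U \<le> k * (CC k x - U div k)" using CC_ub[OF k, of x] by (simp add: algebra_simps)
  thus ?thesis using CC_le[OF k] by blast
qed

locale red =
  fixes a d k c U W Pp Pr :: int
  assumes pos: "a > 0" "d > 0" "k > 0" "c > 0"
    and ord: "0 \<le> W" "W < U" "0 \<le> Pp" "Pp < Pr"
    and cU: "a dvd (U*d - Pp*c)" and cW: "a dvd (W*d - Pr*c)"
    and Rv: "(a+k*d)*U - k*c*Pp > 0" and Rv1: "(a+k*d)*W - k*c*Pr \<le> 0"
begin

lemma I1: "U*d - Pp*c \<ge> - (U div k) * a"
proof -
  obtain m where m: "U*d - Pp*c = a*m" using cU by blast
  have "a*U + k*(U*d - Pp*c) > 0" using Rv by (simp add: algebra_simps)
  hence "a*(U + k*m) > 0" by (simp add: m algebra_simps)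
  hence h: "U + k*m > 0" using pos by (simp add: zero_less_mult_iff)
  have e: "k*(U div k) + U mod k = U" by (rule mult_div_mod_eq)
  have "U mod k < k" using pos by simp
  hence "k*(U div k) + k*m > -k" using h e by linarith
  hence "k*(U div k + m) > -k" by (simp add: algebra_simps)
  hence "k * (-1) < k*(U div k + m)" by simp
  hence "U div k + m > -1" using pos mult_less_cancel_left_pos[of k "-1" "U div k + m"] by blast
  hence "a*(U div k + m) \<ge> 0" using pos by simp
  thus ?thesis by (simp add: m algebra_simps)
qed

lemma I2: "CC k W * a + W*d \<le> Pr*c"
proof -
  obtain m where m: "Pr*c - W*d = a*m" using cW by (metis dvd_minus_iff minus_diff_eq dvd_def)
  have "a*W - k*(Pr*c - W*d) \<le> 0" using Rv1 by (simp add: algebra_simps)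
  hence "a*(W - k*m) \<le> 0" by (simp add: m algebra_simps)
  hence "W - k*m \<le> 0" using pos by (simp add: mult_le_0_iff)
  hence "CC k W \<le> m" using CC_le[of k W m] pos by simp
  hence "CC k W * a \<le> m * a" using pos by simp
  thus ?thesis using m by (simp add: algebra_simps)
qed

abbreviation "L \<equiv> LL U W Pp Pr"
abbreviation "f \<equiv> ph a d k c"

lemma ph_nonneg: "0 \<le> x \<Longrightarrow> 0 \<le> y \<Longrightarrow> 0 \<le> f (x,y)"
  using CC_nonneg[of k x] pos by (simp add: ph_def)

lemma reduce: "0 \<le> x \<Longrightarrow> 0 \<le> y \<Longrightarrow> \<exists>p\<in>L. f p \<le> f (x,y) \<and> a dvd (f p - f (x,y))"
proof (induction "(x,y)" arbitrary: x y rule: wf_induct[OF wf_measures[of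
    "[\<lambda>(x,y). nat (f (x,y)), \<lambda>(x,y). nat ((a+k*d)*x + k*c*y), \<lambda>(x,y). nat y]"]])
  case (1 x y)
  note IH = 1(1)
  have step: "\<exists>p\<in>L. f p \<le> f (x,y) \<and> a dvd (f p - f (x,y))"
    if nn: "0 \<le> x'" "0 \<le> y'" and le: "f (x',y') \<le> f (x,y)" and dv: "a dvd (f (x',y') - f (x,y))"
      and ms: "((x',y'),(x,y)) \<in> measures [\<lambda>(x,y). nat (f (x,y)), \<lambda>(x,y). nat ((a+k*d)*x + k*c*y), \<lambda>(x,y). nat y]"
    for x' y'
  proof -
    obtain p where p: "p \<in> L" "f p \<le> f (x',y')" "a dvd (f p - f (x',y'))" using IH ms nn by blast
    have "a dvd ((f p - f (x',y')) + (f (x',y') - f (x,y)))" using p(3) dv by (rule dvd_add)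
    thus ?thesis using p le by (intro bexI[of _ p]) auto
  qed
  have fn: "0 \<le> f (x,y)" using ph_nonneg 1 by simp
  have pn: "0 \<le> (a+k*d)*x + k*c*y" using 1 pos by simp
  consider (inL) "(x,y) \<in> L" | (R1) "x \<ge> U" | (R3) "x < U" "x \<ge> U - W" "y \<ge> Pr - Pp"
    | (R2) "x < U - W" "y \<ge> Pr"
  proof -
    have "(x,y) \<in> L \<or> U \<le> x \<or> (x<U \<and> U-W \<le> x \<and> Pr-Pp \<le> y) \<or> (x < U-W \<and> Pr \<le> y)"
      using 1(2,3) ord(3) by (simp add: LL_def; arith)
    thus "(\<And>thesis. ((x, y) \<in> L \<Longrightarrow> thesis) \<Longrightarrow> (U \<le> x \<Longrightarrow> thesis) \<Longrightarrow> (x < U \<Longrightarrow> U - W \<le> x \<Longrightarrow> Pr - Pp \<le> y \<Longrightarrow> thesis) \<Longrightarrow> (x < U - W \<Longrightarrow> Pr \<le> y \<Longrightarrow> thesis) \<Longrightarrow> thesis)" by blast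
  qed
  then show ?case
  proof cases
    case inL then show ?thesis by auto
  next
    case R1
    let ?x = "x - U" and ?y = "y + Pp"
    have c1: "CC k ?x \<le> CC k x - U div k" by (rule CC_sub[OF pos(3)])
    have "CC k ?x * a \<le> (CC k x - U div k) * a" using c1 pos by simp
    hence le: "f (?x,?y) \<le> f (x,y)" using I1 by (simp add: ph_def algebra_simps)
    have dv: "a dvd (f (?x,?y) - f (x,y))"
    proof -
      have "f (?x,?y) - f (x,y) = (CC k ?x - CC k x)*a - (U*d - Pp*c)" by (simp add: ph_def algebra_simps)
      thus ?thesis using cU by simp
    qed
    have "(a+k*d)*?x + k*c*?y < (a+k*d)*x + k*c*y" using Rv by (simp add: algebra_simps)
    moreover have "0 \<le> (a+k*d)*?x + k*c*?y" using R1 ord pos 1(3) by (intro add_nonneg_nonneg mult_nonneg_nonneg) auto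
    moreover have "0 \<le> f (?x,?y)" using ph_nonneg R1 ord 1 by simp
    ultimately have ms: "((?x,?y),(x,y)) \<in> measures [\<lambda>(x,y). nat (f (x,y)), \<lambda>(x,y). nat ((a+k*d)*x + k*c*y), \<lambda>(x,y). nat y]"
      using le fn pn by auto
    show ?thesis by (rule step[OF _ _ le dv ms]) (use R1 ord 1 in auto)
  next
    case R3
    let ?x = "x - (U - W)" and ?y = "y - (Pr - Pp)"
    have c1: "CC k ?x \<le> CC k x" using CC_mono[OF pos(3)] ord by simp
    have "CC k ?x * a \<le> CC k x * a" using c1 pos by simp
    moreover have "(U - W)*d + (Pr - Pp)*c > 0" using ord pos by (intro add_pos_pos mult_pos_pos) auto
    ultimately have lt: "f (?x,?y) < f (x,y)" by (simp add: ph_def algebra_simps)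
    have dv: "a dvd (f (?x,?y) - f (x,y))"
    proof -
      have "f (?x,?y) - f (x,y) = (CC k ?x - CC k x)*a - (U*d - Pp*c) + (W*d - Pr*c)" by (simp add: ph_def algebra_simps)
      thus ?thesis using cU cW by simp
    qed
    have nn: "0 \<le> ?x" "0 \<le> ?y" using R3 ord by auto
    have "0 \<le> f (?x,?y)" using ph_nonneg nn by simp
    hence ms: "((?x,?y),(x,y)) \<in> measures [\<lambda>(x,y). nat (f (x,y)), \<lambda>(x,y). nat ((a+k*d)*x + k*c*y), \<lambda>(x,y). nat y]"
      using lt fn by auto
    show ?thesis by (rule step[OF nn _ dv ms]) (use lt in auto)
  next
    case R2
    let ?x = "x + W" and ?y = "y - Pr"
    have c1: "CC k ?x \<le> CC k x + CC k W" by (rule CC_add[OF pos(3)])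
    have "CC k ?x * a \<le> (CC k x + CC k W) * a" using c1 pos by simp
    hence le: "f (?x,?y) \<le> f (x,y)" using I2 by (simp add: ph_def algebra_simps)
    have dv: "a dvd (f (?x,?y) - f (x,y))"
    proof -
      have "f (?x,?y) - f (x,y) = (CC k ?x - CC k x)*a + (W*d - Pr*c)" by (simp add: ph_def algebra_simps)
      thus ?thesis using cW by simp
    qed
    have nn: "0 \<le> ?x" "0 \<le> ?y" using R2 ord 1 by auto
    have "(a+k*d)*?x + k*c*?y \<le> (a+k*d)*x + k*c*y" using Rv1 by (simp add: algebra_simps)
    moreover have "0 \<le> (a+k*d)*?x + k*c*?y" using nn pos by simp
    moreover have "0 \<le> f (?x,?y)" using ph_nonneg nn by simp
    moreover have "?y < y" using ord by simp
    ultimately have ms: "((?x,?y),(x,y)) \<in> measures [\<lambda>(x,y). nat (f (x,y)), \<lambda>(x,y). nat ((a+k*d)*x + k*c*y), \<lambda>(x,y). nat y]"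
      using le fn pn nn by auto
    show ?thesis by (rule step[OF nn le dv ms])
  qed
qed

end


context red begin

lemma L_eq: "L = ({0..U-1} \<times> {0..Pr-Pp-1}) \<union> ({0..U-W-1} \<times> {Pr-Pp..Pr-1})"
  by (auto simp: LL_def)

lemma card_L: assumes det: "U*Pr - W*Pp = a" shows "card L = nat a"
proof -
  have disj: "({0..U-1} \<times> {0..Pr-Pp-1}) \<inter> ({0..U-W-1} \<times> {Pr-Pp..Pr-1}) = {}" by auto
  have "card L = card ({0..U-1} \<times> {0..Pr-Pp-1}) + card ({0..U-W-1} \<times> {Pr-Pp..Pr-1})"
    unfolding L_eq by (rule card_Un_disjoint) (use disj in auto)
  also have "\<dots> = nat U * nat (Pr - Pp) + nat (U - W) * nat Pp"
    by (simp add: card_cartesian_product)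
  finally have "int (card L) = U * (Pr - Pp) + (U - W) * Pp" using ord
    by (simp add: of_nat_mult)
  also have "\<dots> = a" using det by (simp add: algebra_simps)
  finally show ?thesis by simp
qed

lemma finite_L: "finite L" unfolding L_eq by simp

lemma inj_L: assumes det: "U*Pr - W*Pp = a" and g: "gcd a d = 1"
  shows "inj_on (\<lambda>p. f p mod a) L"
proof -
  have img: "(\<lambda>p. f p mod a) ` L = {0..<a}"
  proof
    show "(\<lambda>p. f p mod a) ` L \<subseteq> {0..<a}" using pos by auto
  next
    show "{0..<a} \<subseteq> (\<lambda>p. f p mod a) ` L"
    proof
      fix j assume j: "j \<in> {0..<a}"
      obtain u v where uv: "u*a + v*d = 1" using bezout_int[of a d] g by auto
      define x0 where "x0 = (v*j) mod a"
      have x0: "0 \<le> x0" using pos by (simp add: x0_def)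
      obtain p where p: "p \<in> L" "f p \<le> f (x0,0)" "a dvd (f p - f (x0,0))" using reduce[OF x0, of 0] by auto
      have "a dvd (x0 - v*j)" unfolding x0_def by (simp add: mod_eq_dvd_iff[symmetric])
      hence d1: "a dvd ((x0 - v*j)*d)" by simp
      have d2: "a dvd (j*u*a)" by simp
      have e: "j*(u*a + v*d) = j" using uv by simp
      have "(x0 - v*j)*d - j*u*a = x0*d - j*(u*a + v*d)" by (simp add: algebra_simps)
      also have "\<dots> = x0*d - j" using e by simp
      finally have e2: "(x0 - v*j)*d - j*u*a = x0*d - j" .
      have d3: "a dvd (x0*d - j)" using dvd_diff[OF d1 d2] unfolding e2 .
      have "f p - j = (f p - f (x0,0)) + CC k x0 * a + (x0*d - j)" by (simp add: ph_def)
      hence "a dvd (f p - j)" using p(3) d3 by (metis dvd_add dvd_triv_right)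
      hence "f p mod a = j mod a" by (simp add: mod_eq_dvd_iff)
      also have "\<dots> = j" using j by simp
      finally show "j \<in> (\<lambda>p. f p mod a) ` L" using p(1) by force
    qed
  qed
  show ?thesis
    by (rule eq_card_imp_inj_on[OF finite_L]) (simp add: img card_L[OF det])
qed

lemma AP: assumes det: "U*Pr - W*Pp = a" and g: "gcd a d = 1" and q: "q \<in> L"
  and T: "0 \<le> x" "x \<le> k*t" "0 \<le> y" "f q - a = t*a + x*d + y*c"
  shows False
proof -
  obtain p where p: "p \<in> L" "f p \<le> f (x,y)" "a dvd (f p - f (x,y))" using reduce[OF T(1) T(3)] by blast
  have ct: "CC k x \<le> t" using CC_le pos T by blast
  have "f (x,y) \<le> f q - a" using ct pos T(4) by (simp add: ph_def)
  moreover have "f q - a - f (x,y) = (t - CC k x) * a" using T(4) by (simp add: ph_def algebra_simps)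
  hence d1: "a dvd (f q - a - f (x,y))" by simp
  have "f p - f q = (f p - f (x,y)) - (f q - a - f (x,y)) - a" by simp
  hence "a dvd (f p - f q)" using p(3) d1 by (metis dvd_diff dvd_refl)
  hence "f p mod a = f q mod a" by (simp add: mod_eq_dvd_iff)
  hence "p = q" using inj_L[OF det g] p(1) q by (auto dest: inj_onD)
  thus False using p(2) \<open>f (x,y) \<le> f q - a\<close> pos by simp
qed

end


lemma CC_eq: "k > 0 \<Longrightarrow> k*t - k < x \<Longrightarrow> x \<le> k*t \<Longrightarrow> CC k x = t"
  using CC_le CC_ge by (meson antisym)

lemma CC_plus_k: "k > 0 \<Longrightarrow> CC k (x + k) = CC k x + 1"
  using CC_ub[of k x] CC_lb[of k x] by (intro CC_eq) (auto simp: algebra_simps)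

lemma gens_eq: "AA_gens a d k c = (\<lambda>i. a + i*d) ` {0..k} \<union> {c}"
  by (auto simp: AA_gens_def)

lemma gens_fin: "finite (AA_gens a d k c)" by (simp add: gens_eq)

definition inT :: "int \<Rightarrow> int \<Rightarrow> int \<Rightarrow> int \<Rightarrow> int \<Rightarrow> bool" where
  "inT a d k c n = (\<exists>t x y. 0 \<le> x \<and> x \<le> k*t \<and> 0 \<le> y \<and> n = t*a + x*d + y*c)"

lemma inT_add: "inT a d k c n1 \<Longrightarrow> inT a d k c n2 \<Longrightarrow> inT a d k c (n1 + n2)"
proof -
  assume "inT a d k c n1" "inT a d k c n2"
  then obtain t1 x1 y1 t2 x2 y2 where h: "0 \<le> x1" "x1 \<le> k*t1" "0 \<le> y1" "n1 = t1*a + x1*d + y1*c"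
    "0 \<le> x2" "x2 \<le> k*t2" "0 \<le> y2" "n2 = t2*a + x2*d + y2*c" unfolding inT_def by blast
  show ?thesis unfolding inT_def
    by (rule exI[of _ "t1+t2"], rule exI[of _ "x1+x2"], rule exI[of _ "y1+y2"])
      (use h in \<open>auto simp: algebra_simps\<close>)
qed

lemma inT_gen: assumes "k > 0" "g \<in> AA_gens a d k c" "0 \<le> z" shows "inT a d k c (z * g)"
proof -
  consider (c) "g = c" | (i) i where "0 \<le> i" "i \<le> k" "g = a + i*d" using assms(2) by (auto simp: AA_gens_def)
  then show ?thesis
  proof cases
    case c then show ?thesis unfolding inT_def using assms
      by (intro exI[of _ 0] exI[of _ "z"]) auto
  next
    case i
    have "z * i \<le> z * k" using i assms by (intro mult_left_mono) auto
    then show ?thesis unfolding inT_def using assms i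
      by (intro exI[of _ z] exI[of _ "z*i"] exI[of _ 0]) (auto simp: algebra_simps)
  qed
qed

lemma S_T: assumes k: "k > 0" and n: "n \<in> gen_sg (AA_gens a d k c)" shows "inT a d k c n"
proof -
  obtain f where f: "\<forall>g. f g \<ge> 0" "n = (\<Sum>g\<in>AA_gens a d k c. f g * g)" using n by (auto simp: gen_sg_def)
  have "G \<subseteq> AA_gens a d k c \<Longrightarrow> inT a d k c (\<Sum>g\<in>G. f g * g)" if "finite G" for G
    using that
  proof (induction G rule: finite_induct)
    case empty then show ?case unfolding inT_def by (intro exI[of _ 0]) auto
  next
    case (insert g G)
    then show ?case using inT_add inT_gen[OF k, of g a d c "f g"] f(1) by auto
  qed
  thus ?thesis using f(2) gens_fin by auto
qed

lemma S_add: "n1 \<in> gen_sg G \<Longrightarrow> n2 \<in> gen_sg G \<Longrightarrow> n1 + n2 \<in> gen_sg G"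
proof -
  assume "n1 \<in> gen_sg G" "n2 \<in> gen_sg G"
  then obtain f1 f2 where h: "\<forall>g. f1 g \<ge> 0" "n1 = (\<Sum>g\<in>G. f1 g * g)" "\<forall>g. f2 g \<ge> 0" "n2 = (\<Sum>g\<in>G. f2 g * g)"
    unfolding gen_sg_def by blast
  have "n1 + n2 = (\<Sum>g\<in>G. (f1 g + f2 g) * g)" using h by (simp add: sum.distrib distrib_right)
  moreover have "\<forall>g. f1 g + f2 g \<ge> 0" using h by (simp add: add_nonneg_nonneg)
  ultimately show ?thesis unfolding gen_sg_def mem_Collect_eq
    by (intro exI[of _ "\<lambda>g. f1 g + f2 g"]) simp
qed

lemma S_gen: "finite G \<Longrightarrow> g \<in> G \<Longrightarrow> g \<in> gen_sg G"
proof -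
  assume fin: "finite G" and g: "g \<in> G"
  have "(\<Sum>h\<in>G. (if h = g then 1 else 0) * h) = (\<Sum>h\<in>G. if h = g then h else 0)" by (rule sum.cong) auto
  also have "\<dots> = g" using fin g by (simp add: sum.delta)
  finally have "g = (\<Sum>h\<in>G. (if h = g then 1 else 0) * h)" by simp
  moreover have "\<forall>h. (if h = g then 1 else 0::int) \<ge> 0" by simp
  ultimately show ?thesis unfolding gen_sg_def mem_Collect_eq
    by (intro exI[of _ "\<lambda>h. if h = g then 1 else 0::int"]) simp
qed



theorem lemma5:
  fixes a d k c s0 m v x1 y1 :: int
  assumes pos: "a > 0" "d > 0" "k > 0" "c > 0"
    and k2: "k \<ge> 2"
    and gcd_all: "Gcd (AA_gens a d k c) = 1"
    and gcd_ad: "gcd a d = 1"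
    and s0: "0 \<le> s0" "s0 < a" "[d * s0 = c] (mod a)"
    and m: "m \<ge> -1" "sseq a s0 m > 0" "sseq a s0 (m + 1) = 0"
    and v: "-1 \<le> v" "v \<le> m" "Rseq a d k c s0 (v + 1) \<le> 0" "0 < Rseq a d k c s0 v"
    and psym: "pseudo_symmetric (gen_sg (AA_gens a d k c))"
    and pt: "(x1, y1) \<in> Lset a s0 v"
    and phival: "phi a d k c (x1, y1) = frob (gen_sg (AA_gens a d k c)) div 2 + a"
  shows "(y1 = 0 \<or> (x1, y1 + 1) \<notin> Lset a s0 v)
       \<and> (x1 < k \<or> (x1 + k, y1) \<notin> Lset a s0 v)
       \<and> (x1 = 0 \<or> (x1 + 1, y1) \<notin> Lset a s0 v \<or> [x1 = 1] (mod k))"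
proof -
  define S where "S = gen_sg (AA_gens a d k c)"
  define N where "N = nat (v + 1)"
  obtain U W Pp Pr where st: "cf_state a s0 N = (U, W, Pp, Pr)" by (metis prod.exhaust)
  have sv: "sseq a s0 v = U" "Pseq a s0 v = Pp" using st by (simp_all add: sseq_def Pseq_def N_def)
  have N1: "nat (v + 1 + 1) = Suc N" using v(1) by (simp add: N_def)
  have e1: "sseq a s0 (v+1) = fst (cf_state a s0 (Suc N))" unfolding sseq_def N1 ..
  have e2: "Pseq a s0 (v+1) = fst (snd (snd (cf_state a s0 (Suc N))))" unfolding Pseq_def N1 ..
  have sv1: "sseq a s0 (v+1) = W" "Pseq a s0 (v+1) = Pr"
    using st by (simp_all add: e1 e2 Let_def)
  have Ldef: "Lset a s0 v = LL U W Pp Pr"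
    by (auto simp: Lset_def LL_def sv sv1)
  have ci: "cinv a s0 (cf_state a s0 N)" by (rule cf_inv[OF s0(1,2)])
  have det: "U*Pr - W*Pp = a" and dU: "a dvd (U - Pp*s0)" and dW: "a dvd (W - Pr*s0)"
    and D: "(0 \<le> W \<and> W < U \<and> 0 \<le> Pp \<and> Pp < Pr) \<or>
      (U = 0 \<and> W < 0 \<and> Pr \<le> 0 \<and> 0 < Pp \<and> -Pr < Pp) \<or>
      (U < 0 \<and> W = 0 \<and> Pp \<le> 0 \<and> Pr < Pp) \<or>
      (U = 0 \<and> 0 < W \<and> Pp < 0 \<and> 0 \<le> Pr \<and> Pr < -Pp)" using ci st by (auto simp: cinv_def)
  have Rv: "(a+k*d)*U - k*c*Pp > 0"
  proof -
    have "0 < real_of_int ((a + k*d)*U - k*c*Pp) / real_of_int a" using v(4) by (simp add: Rseq_def sv)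
    hence "0 < real_of_int ((a + k*d)*U - k*c*Pp)" using pos
      by (simp add: zero_less_divide_iff del: of_int_diff of_int_mult of_int_add)
    thus ?thesis by (simp only: of_int_0_less_iff)
  qed
  have Rv1: "(a+k*d)*W - k*c*Pr \<le> 0"
  proof -
    have "real_of_int ((a + k*d)*W - k*c*Pr) / real_of_int a \<le> 0" using v(3) by (simp add: Rseq_def sv1)
    hence "real_of_int ((a + k*d)*W - k*c*Pr) \<le> 0" using pos
      by (simp add: divide_le_0_iff del: of_int_diff of_int_mult of_int_add)
    thus ?thesis by (simp only: of_int_le_0_iff)
  qed
  have ptL: "(x1, y1) \<in> LL U W Pp Pr" using pt Ldef by simp
  have ord: "0 \<le> W" "W < U" "0 \<le> Pp" "Pp < Pr"
  proof -
    have "\<not> (U = 0 \<and> W < 0 \<and> Pr \<le> 0 \<and> 0 < Pp \<and> -Pr < Pp)"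
    proof
      assume h: "U = 0 \<and> W < 0 \<and> Pr \<le> 0 \<and> 0 < Pp \<and> -Pr < Pp"
      have "k*c*Pp > 0" using h pos by simp
      thus False using Rv h by simp
    qed
    moreover have "\<not> (U < 0 \<and> W = 0 \<and> Pp \<le> 0 \<and> Pr < Pp)" using ptL by (auto simp: LL_def)
    moreover have "\<not> (U = 0 \<and> 0 < W \<and> Pp < 0 \<and> 0 \<le> Pr \<and> Pr < -Pp)" using ptL by (auto simp: LL_def)
    ultimately have "0 \<le> W \<and> W < U \<and> 0 \<le> Pp \<and> Pp < Pr" using D by blast
    thus "0 \<le> W" "W < U" "0 \<le> Pp" "Pp < Pr" by auto
  qed
  have ds: "a dvd (d*s0 - c)" using s0(3) by (simp add: cong_iff_dvd_diff)
  have cU: "a dvd (U*d - Pp*c)"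
  proof -
    have "U*d - Pp*c = (U - Pp*s0)*d + Pp*(d*s0 - c)" by (simp add: algebra_simps)
    thus ?thesis using dU ds by (metis dvd_add dvd_mult dvd_mult2)
  qed
  have cW: "a dvd (W*d - Pr*c)"
  proof -
    have "W*d - Pr*c = (W - Pr*s0)*d + Pr*(d*s0 - c)" by (simp add: algebra_simps)
    thus ?thesis using dW ds by (metis dvd_add dvd_mult dvd_mult2)
  qed
  interpret R: red a d k c U W Pp Pr
    using pos ord cU cW Rv Rv1 by unfold_locales auto
  have phiph: "phi a d k c p = ph a d k c p" for p
    by (cases p) (simp add: phi_eq ph_def)
  have APq: "phi a d k c q - a \<notin> S" if q: "q \<in> LL U W Pp Pr" for q
  proof
    assume "phi a d k c q - a \<in> S"
    hence "inT a d k c (ph a d k c q - a)" using S_T[OF pos(3)] by (simp add: S_def phiph)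
    then obtain t x y where "0 \<le> x" "x \<le> k*t" "0 \<le> y" "ph a d k c q - a = t*a + x*d + y*c"
      unfolding inT_def by blast
    thus False using R.AP[OF det gcd_ad q] by blast
  qed
  have genS: "g \<in> S" if "g \<in> AA_gens a d k c" for g
    using S_gen[OF gens_fin that] by (simp add: S_def)
  define F where "F = frob S"
  define h2 where "h2 = F div 2"
  have ps: "even F" "S \<union> {F - s | s. s \<in> S} = UNIV - {h2}"
    using psym by (simp_all add: pseudo_symmetric_def S_def F_def h2_def)
  have F2: "F = 2*h2" using ps(1) by (simp add: h2_def)
  have h2S: "h2 \<notin> S" using ps(2) by blast
  have other: "\<exists>s\<in>S. z = F - s" if "z \<noteq> h2" "z \<notin> S" for z
  proof -
    have "z \<in> S \<union> {F - s | s. s \<in> S}" using ps(2) that(1) by blast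
    thus ?thesis using that(2) by blast
  qed
  have KEY: False if g: "g \<in> S" "g \<noteq> 0" "h2 + g \<notin> S" for g
  proof -
    obtain s where s: "s \<in> S" "h2 + g = F - s" using other[of "h2 + g"] g by auto
    have "h2 = s + g" using s(2) F2 by simp
    hence "h2 \<in> S" using S_add s(1) g(1) by (simp add: S_def)
    thus False using h2S by simp
  qed
  have phi1: "phi a d k c (x1,y1) = h2 + a" using phival by (simp add: h2_def F_def S_def)
  have x1nn: "0 \<le> x1" using ptL by (auto simp: LL_def)
  have partA: "y1 = 0 \<or> (x1, y1 + 1) \<notin> Lset a s0 v"
  proof (rule ccontr)
    assume "\<not> ?thesis"
    hence q: "(x1, y1+1) \<in> LL U W Pp Pr" using Ldef by simp
    have "phi a d k c (x1, y1+1) = h2 + a + c" using phi1 by (simp add: phi_eq algebra_simps)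
    hence "h2 + c \<notin> S" using APq[OF q] by (simp add: ac_simps)
    moreover have "c \<in> S" using genS by (simp add: AA_gens_def)
    ultimately show False using KEY pos by auto
  qed
  have partB: "x1 < k \<or> (x1 + k, y1) \<notin> Lset a s0 v"
  proof (rule ccontr)
    assume "\<not> ?thesis"
    hence q: "(x1 + k, y1) \<in> LL U W Pp Pr" using Ldef by simp
    have "phi a d k c (x1 + k, y1) = h2 + a + (a + k*d)" using phi1 CC_plus_k[OF pos(3), of x1]
      by (simp add: phi_eq algebra_simps)
    hence "h2 + (a + k*d) \<notin> S" using APq[OF q] by (simp add: ac_simps)
    moreover have "a + k*d \<in> S" using genS pos by (auto simp: AA_gens_def)
    moreover have "a + k*d \<noteq> 0"
    proof -
      have "0 < k*d" using pos by simp
      thus ?thesis using pos by linarith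
    qed
    ultimately show False using KEY by auto
  qed
  have partC: "x1 = 0 \<or> (x1 + 1, y1) \<notin> Lset a s0 v \<or> [x1 = 1] (mod k)"
  proof (rule ccontr)
    assume "\<not> ?thesis"
    hence x0: "x1 \<noteq> 0" and q: "(x1 + 1, y1) \<in> LL U W Pp Pr" and nc: "\<not> [x1 = 1] (mod k)" using Ldef by auto
    define r where "r = x1 mod k"
    define qq where "qq = x1 div k"
    have xr: "x1 = k*qq + r" by (simp add: r_def qq_def)
    have r: "0 \<le> r" "r < k" using pos by (simp_all add: r_def)
    have r1: "r \<noteq> 1" using nc k2 by (simp add: r_def cong_def)
    show False
    proof (cases "r = 0")
      case True
      have "CC k x1 = qq" using pos(3) xr True by (intro CC_eq) auto
      moreover have "CC k (x1+1) = qq + 1" using pos(3) xr True by (intro CC_eq) (auto simp: algebra_simps)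
      ultimately have "phi a d k c (x1 + 1, y1) = h2 + a + (a + d)" using phi1
        by (simp add: phi_eq algebra_simps)
      hence "h2 + (a + d) \<notin> S" using APq[OF q] by (simp add: ac_simps)
      moreover have "a + d \<in> S" using genS pos k2 by (auto simp: AA_gens_def intro!: exI[of _ 1])
      moreover have "a + d \<noteq> 0" using pos by simp
      ultimately show False using KEY by auto
    next
      case False
      hence r2: "r \<ge> 2" using r r1 by simp
      have c0: "CC k x1 = qq + 1" using pos(3) xr r r2 by (intro CC_eq) (auto simp: algebra_simps)
      have c1: "CC k (x1+1) = qq + 1" using pos(3) xr r r2 by (intro CC_eq) (auto simp: algebra_simps)
      have c2: "CC k (x1-1) = qq + 1" using pos(3) xr r r2 by (intro CC_eq) (auto simp: algebra_simps)
      have q2: "(x1 - 1, y1) \<in> LL U W Pp Pr" using ptL x0 x1nn by (auto simp: LL_def)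
      have "phi a d k c (x1 + 1, y1) = h2 + a + d" using phi1 c0 c1 by (simp add: phi_eq algebra_simps)
      hence n1: "h2 + d \<notin> S" using APq[OF q] by (simp add: ac_simps)
      have "phi a d k c (x1 - 1, y1) = h2 + a - d" using phi1 c0 c2 by (simp add: phi_eq algebra_simps)
      hence n2: "h2 - d \<notin> S" using APq[OF q2] by simp
      obtain s where s: "s \<in> S" "h2 + d = F - s" using other[of "h2 + d"] n1 pos by auto
      have "s = h2 - d" using s(2) F2 by simp
      thus False using s(1) n2 by simp
    qed
  qed
  show ?thesis using partA partB partC by blast
qed

end
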